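(* In the fixed-flow two-parallel-path setting with $l_{P_1}<l_{P_2}$, and with initial flows at vertices other than $s,d$ satisfying $f_v(0)\le\bar f$, $b_v(0)\le\bar b$, let $T_1=\max_{(u,v)\in E}\log(p_{uv}(0)/(\bar f+\bar b))/\log(1/\delta)$. Then for every integer $t\ge L+\max(0,T_1)$, $$r_{ss_1}(t+1)\ \ge\ r_{\min}(t)\left(1+\frac{\alpha-\beta}{C+\beta}\right),\qquad \alpha=1-l_{P_1},\ \beta=1-l_{P_2},\ C=\frac{5(\bar f+\bar b)}{\bar b(1-\delta)}.$$
   Context: Model (linear decision rule). Directed graph $G=(V,E)$, source $s$, destination $d$, discrete time; pheromone $p_{uv}(t)$, forward flows $f_v(t)$, backward flows $b_v(t)$; leakages $l_v\in[0,1]$; decay $\delta\in(0,1)$; exogenous inputs $f_s(t),b_d(t)$. Edge flows: $f_{uv}(t)=f_u(t)p_{uv}(t)/\sum_{z:(u,z)\in E}p_{uz}(t)$, $b_{uv}(t)=b_v(t)p_{uv}(t)/\sum_{z:(z,v)\in E}p_{zv}(t)$ (at a vertex with a single outgoing, resp. incoming, edge the whole flow goes along it). Updates: $f_v(t+1)=(1-l_v)\sum_{z:(z,v)\in E}f_{zv}(t)$ for $v\neq s$, $b_u(t+1)=(1-l_u)\sum_{z:(u,z)\in E}b_{uz}(t)$ for $u\ne d$, $p_{uv}(t+1)=\delta(p_{uv}(t)+f_{uv}(t)+b_{uv}(t))$. Path leakage $l_P=1-\prod_{v\in P\setminus\{s,d\}}(1-l_v)$. Two parallel paths: $G$ is the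 union of directed paths $P_1,P_2$ from $s$ to $d$ sharing only $s,d$; $s_1,s_2$ are the successors of $s$ and $d_1,d_2$ the predecessors of $d$ on $P_1,P_2$; $m=\mathrm{len}(P_1)$, $n=\mathrm{len}(P_2)$ (numbers of edges), $L=\max(m,n)$. Potential: $r_{ss_1}(t)=p_{ss_1}(t)/p_{ss_2}(t)$, $r_{d_1d}(t)=p_{d_1d}(t)/p_{d_2d}(t)$, and for $t\ge L$, $r_{\min}(t)=\min\{r_{ss_1}(t-i),\,r_{d_1d}(t-i):0\le i\le L-1\}$. Fixed-flow setting: $f_s(t)=\bar f>0$ and $b_d(t)=\bar b>0$ for all $t$, and all initial pheromone levels $p_{uv}(0)$ are positive. *)

theory Defs
  imports Complex_Main
begin

text \<open>Vertices of the two-parallel-path graph: source, destination, the internal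
  vertices V1 k (0 < k < m) of P1 and V2 k (0 < k < n) of P2.\<close>
datatype vtx = Src | Dst | V1 nat | V2 nat

definition pv1 :: "nat \<Rightarrow> nat \<Rightarrow> vtx" where
  "pv1 m k = (if k = 0 then Src else if k = m then Dst else V1 k)"

definition pv2 :: "nat \<Rightarrow> nat \<Rightarrow> vtx" where
  "pv2 n k = (if k = 0 then Src else if k = n then Dst else V2 k)"

definition edges2 :: "nat \<Rightarrow> nat \<Rightarrow> (vtx \<times> vtx) set" where
  "edges2 m n = {(pv1 m k, pv1 m (Suc k)) | k. k < m} \<union> {(pv2 n k, pv2 n (Suc k)) | k. k < n}"

definition verts :: "(vtx \<times> vtx) set \<Rightarrow> vtx set" where
  "verts E = fst ` E \<union> snd ` E"

definition fedge :: "(vtx \<times> vtx) set \<Rightarrow> (vtx \<Rightarrow> vtx \<Rightarrow> real) \<Rightarrow> (vtx \<Rightarrow> real) \<Rightarrow> vtx \<Rightarrow> vtx \<Rightarrow> real" where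
  "fedge E p f u v = f u * p u v / (\<Sum>z\<in>{z. (u, z) \<in> E}. p u z)"

definition bedge :: "(vtx \<times> vtx) set \<Rightarrow> (vtx \<Rightarrow> vtx \<Rightarrow> real) \<Rightarrow> (vtx \<Rightarrow> real) \<Rightarrow> vtx \<Rightarrow> vtx \<Rightarrow> real" where
  "bedge E p b u v = b v * p u v / (\<Sum>z\<in>{z. (z, v) \<in> E}. p z v)"

definition ant_dynamics ::
  "(vtx \<times> vtx) set \<Rightarrow> vtx \<Rightarrow> vtx \<Rightarrow> (vtx \<Rightarrow> real) \<Rightarrow> real \<Rightarrow> (nat \<Rightarrow> real) \<Rightarrow> (nat \<Rightarrow> real)
   \<Rightarrow> (nat \<Rightarrow> vtx \<Rightarrow> vtx \<Rightarrow> real) \<Rightarrow> (nat \<Rightarrow> vtx \<Rightarrow> real) \<Rightarrow> (nat \<Rightarrow> vtx \<Rightarrow> real) \<Rightarrow> bool" where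
  "ant_dynamics E s d l \<delta> fs bd p f b \<longleftrightarrow>
     (\<forall>t. f t s = fs t) \<and> (\<forall>t. b t d = bd t) \<and>
     (\<forall>t. \<forall>v\<in>verts E. v \<noteq> s \<longrightarrow>
        f (Suc t) v = (1 - l v) * (\<Sum>z\<in>{z. (z, v) \<in> E}. fedge E (p t) (f t) z v)) \<and>
     (\<forall>t. \<forall>u\<in>verts E. u \<noteq> d \<longrightarrow>
        b (Suc t) u = (1 - l u) * (\<Sum>z\<in>{z. (u, z) \<in> E}. bedge E (p t) (b t) u z)) \<and>
     (\<forall>t. \<forall>(u, v)\<in>E.
        p (Suc t) u v = \<delta> * (p t u v + fedge E (p t) (f t) u v + bedge E (p t) (b t) u v))"

definition leak1 :: "nat \<Rightarrow> (vtx \<Rightarrow> real) \<Rightarrow> real" where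
  "leak1 m l = 1 - (\<Prod>k\<in>{0<..<m}. (1 - l (V1 k)))"

definition leak2 :: "nat \<Rightarrow> (vtx \<Rightarrow> real) \<Rightarrow> real" where
  "leak2 n l = 1 - (\<Prod>k\<in>{0<..<n}. (1 - l (V2 k)))"

definition r_s1 :: "nat \<Rightarrow> nat \<Rightarrow> (nat \<Rightarrow> vtx \<Rightarrow> vtx \<Rightarrow> real) \<Rightarrow> nat \<Rightarrow> real" where
  "r_s1 m n p t = p t Src (pv1 m 1) / p t Src (pv2 n 1)"

definition r_d1 :: "nat \<Rightarrow> nat \<Rightarrow> (nat \<Rightarrow> vtx \<Rightarrow> vtx \<Rightarrow> real) \<Rightarrow> nat \<Rightarrow> real" where
  "r_d1 m n p t = p t (pv1 m (m - 1)) Dst / p t (pv2 n (n - 1)) Dst"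

definition r_min :: "nat \<Rightarrow> nat \<Rightarrow> (nat \<Rightarrow> vtx \<Rightarrow> vtx \<Rightarrow> real) \<Rightarrow> nat \<Rightarrow> real" where
  "r_min m n p t = Min ((\<lambda>i. r_s1 m n p (t - i)) ` {..<max m n} \<union> (\<lambda>i. r_d1 m n p (t - i)) ` {..<max m n})"

end

theory Submission
  imports Defs
begin


lemma edges2_iff: "(u,v) \<in> edges2 m n \<longleftrightarrow> (\<exists>k<m. u = pv1 m k \<and> v = pv1 m (Suc k)) \<or> (\<exists>k<n. u = pv2 n k \<and> v = pv2 n (Suc k))"
  by (auto simp: edges2_def)

lemma pv1_simps: "pv1 m j = Src \<longleftrightarrow> j = 0" "pv1 m j = Dst \<longleftrightarrow> j \<noteq> 0 \<and> j = m"
  "pv1 m j = V1 k \<longleftrightarrow> j = k \<and> k \<noteq> 0 \<and> k \<noteq> m" "pv1 m j \<noteq> V2 k"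
  by (auto simp: pv1_def)
lemma pv1_simps': "Src = pv1 m j \<longleftrightarrow> j = 0" "Dst = pv1 m j \<longleftrightarrow> j \<noteq> 0 \<and> j = m"
  "V1 k = pv1 m j \<longleftrightarrow> j = k \<and> k \<noteq> 0 \<and> k \<noteq> m" "V2 k \<noteq> pv1 m j"
  by (auto simp: pv1_def)
lemma pv2_simps: "pv2 m j = Src \<longleftrightarrow> j = 0" "pv2 m j = Dst \<longleftrightarrow> j \<noteq> 0 \<and> j = m"
  "pv2 m j = V2 k \<longleftrightarrow> j = k \<and> k \<noteq> 0 \<and> k \<noteq> m" "pv2 m j \<noteq> V1 k"
  by (auto simp: pv2_def)
lemma pv2_simps': "Src = pv2 m j \<longleftrightarrow> j = 0" "Dst = pv2 m j \<longleftrightarrow> j \<noteq> 0 \<and> j = m"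
  "V2 k = pv2 m j \<longleftrightarrow> j = k \<and> k \<noteq> 0 \<and> k \<noteq> m" "V1 k \<noteq> pv2 m j"
  by (auto simp: pv2_def)

lemma edge1: "k<m \<Longrightarrow> (pv1 m k, pv1 m (Suc k)) \<in> edges2 m n" by (auto simp: edges2_def)
lemma edge2: "k<n \<Longrightarrow> (pv2 n k, pv2 n (Suc k)) \<in> edges2 m n" by (auto simp: edges2_def)
lemma pv1_cases: "k \<le> m \<Longrightarrow> pv1 m k = Src \<or> pv1 m k = Dst \<or> (0<k \<and> k<m \<and> pv1 m k = V1 k)" by (auto simp: pv1_def)
lemma pv2_cases: "k \<le> n \<Longrightarrow> pv2 n k = Src \<or> pv2 n k = Dst \<or> (0<k \<and> k<n \<and> pv2 n k = V2 k)" by (auto simp: pv2_def)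
lemma out_Src: "m \<ge> 1 \<Longrightarrow> n \<ge> 1 \<Longrightarrow> {z. (Src,z) \<in> edges2 m n} = {pv1 m 1, pv2 n 1}"
  by (auto simp: edges2_iff pv1_simps pv2_simps pv1_simps' pv2_simps')
lemma in_Dst: "{z. (z,Dst) \<in> edges2 m n} = {pv1 m (m-1), pv2 n (n-1)}" if "m \<ge> 1" "n \<ge> 1"
proof
  show "{z. (z,Dst) \<in> edges2 m n} \<subseteq> {pv1 m (m-1), pv2 n (n-1)}"
    by (auto simp: edges2_iff pv1_simps pv2_simps pv1_simps' pv2_simps')
  show "{pv1 m (m-1), pv2 n (n-1)} \<subseteq> {z. (z,Dst) \<in> edges2 m n}"
    using edge1[of "m-1" m n] edge2[of "n-1" n m] that by (auto simp: pv1_def pv2_def)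
qed
lemma out_V1: "0<k \<Longrightarrow> k<m \<Longrightarrow> {z. (V1 k, z) \<in> edges2 m n} = {pv1 m (Suc k)}"
  by (auto simp: edges2_iff pv1_simps pv2_simps pv1_simps' pv2_simps')
lemma in_V1: "0<k \<Longrightarrow> k<m \<Longrightarrow> {z. (z, V1 k) \<in> edges2 m n} = {pv1 m (k-1)}"
  using edge1[of "k-1" m n] apply (auto simp: edges2_iff pv1_simps pv2_simps pv1_simps' pv2_simps')
  apply (rule exI[of _ "k-1"]) apply simp done
lemma out_V2: "0<k \<Longrightarrow> k<n \<Longrightarrow> {z. (V2 k, z) \<in> edges2 m n} = {pv2 n (Suc k)}"
  by (auto simp: edges2_iff pv1_simps pv2_simps pv1_simps' pv2_simps')
lemma in_V2: "0<k \<Longrightarrow> k<n \<Longrightarrow> {z. (z, V2 k) \<in> edges2 m n} = {pv2 n (k-1)}"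
  using edge2[of "k-1" n m] apply (auto simp: edges2_iff pv1_simps pv2_simps pv1_simps' pv2_simps')
  apply (rule exI[of _ "k-1"]) apply simp done
lemma no_out_Dst: "(Dst, z) \<notin> edges2 m n" and no_in_Src: "(z, Src) \<notin> edges2 m n"
  by (auto simp: edges2_iff pv1_simps pv2_simps pv1_simps' pv2_simps')
lemma verts_cases: "v = Src \<or> v = Dst \<or> (\<exists>k. 0<k \<and> k<m \<and> v = V1 k) \<or> (\<exists>k. 0<k \<and> k<n \<and> v = V2 k)" if "v \<in> verts (edges2 m n)"
proof -
  have "\<exists>j. (j \<le> m \<and> v = pv1 m j) \<or> (j \<le> n \<and> v = pv2 n j)"
    using that unfolding verts_def by (auto; metis edges2_iff less_imp_le Suc_leI)
  then show ?thesis using pv1_cases pv2_cases by metis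
qed
lemma finite_edges: "finite (edges2 m n)"
proof -
  have "edges2 m n = (\<lambda>k. (pv1 m k, pv1 m (Suc k))) ` {..<m} \<union> (\<lambda>k. (pv2 n k, pv2 n (Suc k))) ` {..<n}"
    by (auto simp: edges2_def)
  thus ?thesis by simp
qed

locale ant =
  fixes m n :: nat and l :: "vtx \<Rightarrow> real" and \<delta> fbar bbar :: real
    and p :: "nat \<Rightarrow> vtx \<Rightarrow> vtx \<Rightarrow> real" and f b :: "nat \<Rightarrow> vtx \<Rightarrow> real"
  assumes m1: "m \<ge> 1" and n1: "n \<ge> 1" and mn: "\<not> (m = 1 \<and> n = 1)"
    and dpos: "0 < \<delta>" and dlt: "\<delta> < 1"
    and lr: "\<forall>v\<in>verts (edges2 m n). 0 \<le> l v \<and> l v \<le> 1"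
    and fpos: "fbar > 0" and bpos: "bbar > 0"
    and dyn: "ant_dynamics (edges2 m n) Src Dst l \<delta> (\<lambda>_. fbar) (\<lambda>_. bbar) p f b"
    and p0: "\<forall>(u, v)\<in>edges2 m n. p 0 u v > 0"
    and init: "\<forall>v\<in>verts (edges2 m n) - {Src, Dst}. 0 \<le> f 0 v \<and> f 0 v \<le> fbar \<and> 0 \<le> b 0 v \<and> b 0 v \<le> bbar"
begin

abbreviation "E \<equiv> edges2 m n"

lemma fS: "f t Src = fbar" and bD: "b t Dst = bbar"
  using dyn unfolding ant_dynamics_def by auto
lemma fstep: "v \<in> verts E \<Longrightarrow> v \<noteq> Src \<Longrightarrow> f (Suc t) v = (1 - l v) * (\<Sum>z\<in>{z. (z, v) \<in> E}. fedge E (p t) (f t) z v)"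
  using dyn unfolding ant_dynamics_def by auto
lemma bstep: "u \<in> verts E \<Longrightarrow> u \<noteq> Dst \<Longrightarrow> b (Suc t) u = (1 - l u) * (\<Sum>z\<in>{z. (u, z) \<in> E}. bedge E (p t) (b t) u z)"
  using dyn unfolding ant_dynamics_def by auto
lemma pstep: "(u,v) \<in> E \<Longrightarrow> p (Suc t) u v = \<delta> * (p t u v + fedge E (p t) (f t) u v + bedge E (p t) (b t) u v)"
  using dyn unfolding ant_dynamics_def by fastforce

lemma in_verts1: "(u,v) \<in> E \<Longrightarrow> u \<in> verts E" and in_verts2: "(u,v) \<in> E \<Longrightarrow> v \<in> verts E"
  unfolding verts_def by force+

lemma fin_out: "finite {z. (u,z) \<in> E}"
  by (rule finite_subset[of _ "snd ` E"]) (force, simp add: finite_edges)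
lemma fin_in: "finite {z. (z,v) \<in> E}"
  by (rule finite_subset[of _ "fst ` E"]) (force, simp add: finite_edges)

definition inv where "inv t \<longleftrightarrow> (\<forall>u v. (u,v) \<in> E \<longrightarrow> p t u v > 0) \<and>
   (\<forall>u\<in>verts E. u \<noteq> Dst \<longrightarrow> 0 \<le> f t u) \<and> (\<forall>v\<in>verts E. v \<noteq> Src \<longrightarrow> 0 \<le> b t v \<and> b t v \<le> bbar)"

lemma sum_out_pos: "inv t \<Longrightarrow> (u,v) \<in> E \<Longrightarrow> 0 < (\<Sum>z\<in>{z. (u,z) \<in> E}. p t u z)"
  unfolding inv_def by (intro sum_pos2[OF fin_out, of v]) (auto intro: less_imp_le)
lemma sum_in_pos: "inv t \<Longrightarrow> (u,v) \<in> E \<Longrightarrow> 0 < (\<Sum>z\<in>{z. (z,v) \<in> E}. p t z v)"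
  unfolding inv_def by (intro sum_pos2[OF fin_in, of u]) (auto intro: less_imp_le)
lemma sum_in_ge: "inv t \<Longrightarrow> (u,v) \<in> E \<Longrightarrow> p t u v \<le> (\<Sum>z\<in>{z. (z,v) \<in> E}. p t z v)"
  unfolding inv_def by (intro member_le_sum[OF _ _ fin_in]) (auto intro: less_imp_le)

lemma fedge_nn: "inv t \<Longrightarrow> (u,v) \<in> E \<Longrightarrow> 0 \<le> fedge E (p t) (f t) u v"
proof -
  assume a: "inv t" "(u,v) \<in> E"
  have "u \<noteq> Dst" using a no_out_Dst by auto
  hence "0 \<le> f t u" using a in_verts1 unfolding inv_def by auto
  moreover have "0 < p t u v" using a unfolding inv_def by auto
  ultimately show ?thesis unfolding fedge_def using sum_out_pos[OF a] by simp
qed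

lemma bedge_nn: "inv t \<Longrightarrow> (u,v) \<in> E \<Longrightarrow> 0 \<le> bedge E (p t) (b t) u v"
  and bedge_le: "inv t \<Longrightarrow> (u,v) \<in> E \<Longrightarrow> bedge E (p t) (b t) u v \<le> bbar"
proof -
  assume a: "inv t" "(u,v) \<in> E"
  have "v \<noteq> Src" using a no_in_Src by auto
  hence bv: "0 \<le> b t v" "b t v \<le> bbar" using a in_verts2 unfolding inv_def by auto
  have pp: "0 < p t u v" using a unfolding inv_def by auto
  have S: "0 < (\<Sum>z\<in>{z. (z,v) \<in> E}. p t z v)" "p t u v \<le> (\<Sum>z\<in>{z. (z,v) \<in> E}. p t z v)"
    using sum_in_pos[OF a] sum_in_ge[OF a] by auto
  show "0 \<le> bedge E (p t) (b t) u v" unfolding bedge_def using bv pp S by simp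
  have "bedge E (p t) (b t) u v = b t v * (p t u v / (\<Sum>z\<in>{z. (z,v) \<in> E}. p t z v))"
    unfolding bedge_def by simp
  also have "\<dots> \<le> b t v * 1" using S bv by (intro mult_left_mono) auto
  finally show "bedge E (p t) (b t) u v \<le> bbar" using bv by simp
qed

lemma out_internal: "v \<in> verts E \<Longrightarrow> v \<noteq> Src \<Longrightarrow> v \<noteq> Dst \<Longrightarrow> \<exists>w. {z. (v,z) \<in> E} = {w}"
  using verts_cases[of v m n] out_V1[of _ m n] out_V2[of _ n m] by auto

lemma inv_all: "inv t"
proof (induction t)
  case 0
  show ?case unfolding inv_def using p0 init fS bD fpos bpos by auto
next
  case (Suc t)
  have P: "p (Suc t) u v > 0" if "(u,v) \<in> E" for u v
  proof -
    have "p t u v > 0" using Suc that unfolding inv_def by auto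
    thus ?thesis using pstep[OF that] fedge_nn[OF Suc that] bedge_nn[OF Suc that] dpos by simp
  qed
  have F: "0 \<le> f (Suc t) u" if "u \<in> verts E" "u \<noteq> Dst" for u
  proof (cases "u = Src")
    case True thus ?thesis using fS fpos by simp
  next
    case False
    have "0 \<le> 1 - l u" using lr that by auto
    moreover have "0 \<le> (\<Sum>z\<in>{z. (z, u) \<in> E}. fedge E (p t) (f t) z u)"
      using fedge_nn[OF Suc] by (intro sum_nonneg) auto
    ultimately show ?thesis using fstep[OF that(1) False] by simp
  qed
  have B: "0 \<le> b (Suc t) v \<and> b (Suc t) v \<le> bbar" if vv: "v \<in> verts E" "v \<noteq> Src" for v
  proof (cases "v = Dst")
    case True thus ?thesis using bD bpos by simp
  next
    case False
    obtain w where w: "{z. (v,z) \<in> E} = {w}" using out_internal[OF vv False] by blast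
    hence vw: "(v,w) \<in> E" by auto
    have l: "0 \<le> 1 - l v" "1 - l v \<le> 1" using lr vv by auto
    have "b (Suc t) v = (1 - l v) * bedge E (p t) (b t) v w" using bstep[OF vv(1) False] w by simp
    thus ?thesis using l bedge_nn[OF Suc vw] bedge_le[OF Suc vw]
      by (metis mult_left_le_one_le mult_nonneg_nonneg order_trans)
  qed
  show ?case unfolding inv_def using P F B by auto
qed


definition "x1 t = p t (pv1 m (m-1)) Dst / (p t (pv1 m (m-1)) Dst + p t (pv2 n (n-1)) Dst)"
definition "x2 t = p t (pv2 n (n-1)) Dst / (p t (pv1 m (m-1)) Dst + p t (pv2 n (n-1)) Dst)"

lemma d12: "pv1 m (m-1) \<noteq> pv2 n (n-1)"
  using m1 n1 mn by (auto simp: pv1_def pv2_def)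
lemma s12: "pv1 m 1 \<noteq> pv2 n 1"
  using m1 n1 mn by (auto simp: pv1_def pv2_def)

lemma bedge_D1: "bedge E (p t) (b t) (pv1 m (m-1)) Dst = bbar * x1 t"
  unfolding bedge_def x1_def in_Dst[OF m1 n1] using d12 bD by simp
lemma bedge_D2: "bedge E (p t) (b t) (pv2 n (n-1)) Dst = bbar * x2 t"
  unfolding bedge_def x2_def in_Dst[OF m1 n1] using d12 bD by (simp add: add.commute)

lemma pos: "(u,v) \<in> E \<Longrightarrow> p t u v > 0"
  using inv_all unfolding inv_def by auto

lemma path1: "m \<ge> 2 \<Longrightarrow> 1 \<le> i \<Longrightarrow> i < m \<Longrightarrow> i \<le> t \<Longrightarrow>
   b t (V1 (m-i)) = (\<Prod>j\<in>{m-i..<m}. 1 - l (V1 j)) * bbar * x1 (t-i)"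
proof (induction i arbitrary: t)
  case 0 thus ?case by simp
next
  case (Suc i)
  then obtain t' where t: "t = Suc t'" by (cases t) auto
  show ?case
  proof (cases "i = 0")
    case True
    have "(V1 (m-1), Dst) \<in> E" using edge1[of "m-1" m n] Suc.prems by (auto simp: pv1_def split: if_splits)
    hence vv: "V1 (m-1) \<in> verts E" by (rule in_verts1)
    have h: "pv1 m (m-1) = V1 (m-1)" using Suc.prems by (auto simp: pv1_def)
    have "b t (V1 (m-1)) = (1 - l (V1 (m-1))) * bedge E (p t') (b t') (V1 (m-1)) Dst"
      using bstep[OF vv, of t'] out_V1[of "m-1" m n] Suc.prems t by (simp add: pv1_def)
    also have "\<dots> = (1 - l (V1 (m-1))) * (bbar * x1 t')"
      using bedge_D1[of t'] Suc.prems h by simp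
    finally have eq: "b t (V1 (m-1)) = (1 - l (V1 (m-1))) * (bbar * x1 t')" .
    have "{m-1..<m} = {m-1}" using Suc.prems by auto
    thus ?thesis using eq True t Suc.prems by simp
  next
    case False
    define k where "k = m - Suc i"
    have k: "0 < k" "k < m" using Suc.prems False by (auto simp: k_def)
    have kk: "Suc k = m - i" using Suc.prems False by (auto simp: k_def)
    have hk1: "pv1 m (Suc k) = V1 (Suc k)" and hk0: "pv1 m k = V1 k"
      using Suc.prems False k kk by (auto simp: pv1_def)
    have e: "(V1 k, V1 (Suc k)) \<in> E" using edge1[of k m n] k hk1 hk0 by simp
    have vv: "V1 k \<in> verts E" using e by (rule in_verts1)
    have "b t (V1 k) = (1 - l (V1 k)) * bedge E (p t') (b t') (V1 k) (V1 (Suc k))"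
      using bstep[OF vv, of t'] out_V1[of k m n] k t hk1 by simp
    also have "bedge E (p t') (b t') (V1 k) (V1 (Suc k)) = b t' (V1 (Suc k))"
    proof -
      have ks: "Suc k < m" using kk False k by arith
      have iv: "{z. (z, V1 (Suc k)) \<in> E} = {V1 k}" using in_V1[of "Suc k" m n, OF zero_less_Suc ks] hk0 by simp
      show ?thesis unfolding bedge_def iv using pos[OF e, of t'] by simp
    qed
    also have "b t' (V1 (Suc k)) = (\<Prod>j\<in>{Suc k..<m}. 1 - l (V1 j)) * bbar * x1 (t'-i)"
      using Suc.IH[of t'] Suc.prems False t kk by simp
    finally have "b t (V1 k) = (1 - l (V1 k)) * ((\<Prod>j\<in>{Suc k..<m}. 1 - l (V1 j)) * bbar * x1 (t'-i))" .
    moreover have "(\<Prod>j\<in>{k..<m}. 1 - l (V1 j)) = (1 - l (V1 k)) * (\<Prod>j\<in>{Suc k..<m}. 1 - l (V1 j))"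
      using k by (simp add: prod.atLeast_Suc_lessThan)
    ultimately show ?thesis using t k by (simp add: k_def)
  qed
qed

lemma path2: "n \<ge> 2 \<Longrightarrow> 1 \<le> i \<Longrightarrow> i < n \<Longrightarrow> i \<le> t \<Longrightarrow>
   b t (V2 (n-i)) = (\<Prod>j\<in>{n-i..<n}. 1 - l (V2 j)) * bbar * x2 (t-i)"
proof (induction i arbitrary: t)
  case 0 thus ?case by simp
next
  case (Suc i)
  then obtain t' where t: "t = Suc t'" by (cases t) auto
  show ?case
  proof (cases "i = 0")
    case True
    have "(V2 (n-1), Dst) \<in> E" using edge2[of "n-1" n m] Suc.prems by (auto simp: pv2_def split: if_splits)
    hence vv: "V2 (n-1) \<in> verts E" by (rule in_verts1)
    have h: "pv2 n (n-1) = V2 (n-1)" using Suc.prems by (auto simp: pv2_def)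
    have "b t (V2 (n-1)) = (1 - l (V2 (n-1))) * bedge E (p t') (b t') (V2 (n-1)) Dst"
      using bstep[OF vv, of t'] out_V2[of "n-1" n m] Suc.prems t by (simp add: pv2_def)
    also have "\<dots> = (1 - l (V2 (n-1))) * (bbar * x2 t')"
      using bedge_D2[of t'] Suc.prems h by simp
    finally have eq: "b t (V2 (n-1)) = (1 - l (V2 (n-1))) * (bbar * x2 t')" .
    have "{n-1..<n} = {n-1}" using Suc.prems by auto
    thus ?thesis using eq True t Suc.prems by simp
  next
    case False
    define k where "k = n - Suc i"
    have k: "0 < k" "k < n" using Suc.prems False by (auto simp: k_def)
    have kk: "Suc k = n - i" using Suc.prems False by (auto simp: k_def)
    have hk1: "pv2 n (Suc k) = V2 (Suc k)" and hk0: "pv2 n k = V2 k"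
      using Suc.prems False k kk by (auto simp: pv2_def)
    have e: "(V2 k, V2 (Suc k)) \<in> E" using edge2[of k n m] k hk1 hk0 by simp
    have vv: "V2 k \<in> verts E" using e by (rule in_verts1)
    have "b t (V2 k) = (1 - l (V2 k)) * bedge E (p t') (b t') (V2 k) (V2 (Suc k))"
      using bstep[OF vv, of t'] out_V2[of k n m] k t hk1 by simp
    also have "bedge E (p t') (b t') (V2 k) (V2 (Suc k)) = b t' (V2 (Suc k))"
    proof -
      have ks: "Suc k < n" using kk False k by arith
      have iv: "{z. (z, V2 (Suc k)) \<in> E} = {V2 k}" using in_V2[of "Suc k" n m, OF zero_less_Suc ks] hk0 by simp
      show ?thesis unfolding bedge_def iv using pos[OF e, of t'] by simp
    qed
    also have "b t' (V2 (Suc k)) = (\<Prod>j\<in>{Suc k..<n}. 1 - l (V2 j)) * bbar * x2 (t'-i)"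
      using Suc.IH[of t'] Suc.prems False t kk by simp
    finally have "b t (V2 k) = (1 - l (V2 k)) * ((\<Prod>j\<in>{Suc k..<n}. 1 - l (V2 j)) * bbar * x2 (t'-i))" .
    moreover have "(\<Prod>j\<in>{k..<n}. 1 - l (V2 j)) = (1 - l (V2 k)) * (\<Prod>j\<in>{Suc k..<n}. 1 - l (V2 j))"
      using k by (simp add: prod.atLeast_Suc_lessThan)
    ultimately show ?thesis using t k by (simp add: k_def)
  qed
qed


lemma bS1: "m - 1 \<le> t \<Longrightarrow> bedge E (p t) (b t) Src (pv1 m 1) = (1 - leak1 m l) * bbar * x1 (t - (m-1))"
proof (cases "m = 1")
  case True
  have "{0<..<Suc 0} = ({}::nat set)" by auto
  thus ?thesis using bedge_D1[of t] True by (simp add: pv1_def leak1_def)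
next
  case False
  hence m2: "m \<ge> 2" using m1 by simp
  have h1: "pv1 m 1 = V1 1" using m2 by (simp add: pv1_def)
  have e: "(Src, V1 1) \<in> E" using edge1[of 0 m n] m2 h1 by (simp add: pv1_def)
  have iv: "{z. (z, V1 1) \<in> E} = {Src}" using in_V1[of 1 m n] m2 by (simp add: pv1_def)
  assume t: "m - 1 \<le> t"
  have "bedge E (p t) (b t) Src (pv1 m 1) = b t (V1 1)"
    unfolding bedge_def h1 iv using pos[OF e, of t] by simp
  also have "\<dots> = (\<Prod>j\<in>{1..<m}. 1 - l (V1 j)) * bbar * x1 (t - (m-1))"
    using path1[of "m-1" t] m2 t by simp
  also have "(\<Prod>j\<in>{1..<m}. 1 - l (V1 j)) = 1 - leak1 m l"
    unfolding leak1_def using atLeastSucLessThan_greaterThanLessThan[of 0 m] by simp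
  finally show ?thesis .
qed

lemma bS2: "n - 1 \<le> t \<Longrightarrow> bedge E (p t) (b t) Src (pv2 n 1) = (1 - leak2 n l) * bbar * x2 (t - (n-1))"
proof (cases "n = 1")
  case True
  have "{0<..<Suc 0} = ({}::nat set)" by auto
  thus ?thesis using bedge_D2[of t] True by (simp add: pv2_def leak2_def)
next
  case False
  hence m2: "n \<ge> 2" using n1 by simp
  have h1: "pv2 n 1 = V2 1" using m2 by (simp add: pv2_def)
  have e: "(Src, V2 1) \<in> E" using edge2[of 0 n m] m2 h1 by (simp add: pv2_def)
  have iv: "{z. (z, V2 1) \<in> E} = {Src}" using in_V2[of 1 n m] m2 by (simp add: pv2_def)
  assume t: "n - 1 \<le> t"
  have "bedge E (p t) (b t) Src (pv2 n 1) = b t (V2 1)"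
    unfolding bedge_def h1 iv using pos[OF e, of t] by simp
  also have "\<dots> = (\<Prod>j\<in>{1..<n}. 1 - l (V2 j)) * bbar * x2 (t - (n-1))"
    using path2[of "n-1" t] m2 t by simp
  also have "(\<Prod>j\<in>{1..<n}. 1 - l (V2 j)) = 1 - leak2 n l"
    unfolding leak2_def using atLeastSucLessThan_greaterThanLessThan[of 0 n] by simp
  finally show ?thesis .
qed

lemma eS1: "(Src, pv1 m 1) \<in> E" using edge1[of 0 m n] m1 by (simp add: pv1_def)
lemma eS2: "(Src, pv2 n 1) \<in> E" using edge2[of 0 n m] n1 by (simp add: pv2_def)
lemma eD1: "(pv1 m (m-1), Dst) \<in> E" using edge1[of "m-1" m n] m1 by (simp add: pv1_def)
lemma eD2: "(pv2 n (n-1), Dst) \<in> E" using edge2[of "n-1" n m] n1 by (simp add: pv2_def)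

lemma fS1: "fedge E (p t) (f t) Src (pv1 m 1) = fbar * p t Src (pv1 m 1) / (p t Src (pv1 m 1) + p t Src (pv2 n 1))"
  unfolding fedge_def out_Src[OF m1 n1] using s12 fS by simp
lemma fS2: "fedge E (p t) (f t) Src (pv2 n 1) = fbar * p t Src (pv2 n 1) / (p t Src (pv1 m 1) + p t Src (pv2 n 1))"
  unfolding fedge_def out_Src[OF m1 n1] using s12 fS by (simp add: add.commute)

definition "S t = p t Src (pv1 m 1) + p t Src (pv2 n 1)"

lemma S_step: "S (Suc t) \<le> \<delta> * S t + 2 * (fbar + bbar)"
proof -
  have a: "fedge E (p t) (f t) Src (pv1 m 1) + fedge E (p t) (f t) Src (pv2 n 1) = fbar"
    unfolding fS1 fS2 using pos[OF eS1, of t] pos[OF eS2, of t]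
    by (simp add: add_divide_distrib[symmetric] ring_distribs(1)[symmetric])
  have b1: "bedge E (p t) (b t) Src (pv1 m 1) \<le> bbar" "bedge E (p t) (b t) Src (pv2 n 1) \<le> bbar"
    using bedge_le[OF inv_all eS1] bedge_le[OF inv_all eS2] by auto
  have "S (Suc t) = \<delta> * (S t + (fedge E (p t) (f t) Src (pv1 m 1) + fedge E (p t) (f t) Src (pv2 n 1)) + bedge E (p t) (b t) Src (pv1 m 1) + bedge E (p t) (b t) Src (pv2 n 1))"
    unfolding S_def pstep[OF eS1] pstep[OF eS2] by (simp add: algebra_simps)
  also have "\<dots> = \<delta> * (S t + fbar + bedge E (p t) (b t) Src (pv1 m 1) + bedge E (p t) (b t) Src (pv2 n 1))"
    unfolding a ..
  also have "\<dots> \<le> \<delta> * (S t + fbar + 2 * bbar)" using b1 dpos by (intro mult_left_mono) auto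
  also have "\<dots> \<le> \<delta> * S t + 2 * (fbar + bbar)" using dpos dlt fpos bpos
    by (simp add: ring_distribs) (smt (verit) mult_left_le_one_le)
  finally show ?thesis .
qed

lemma S_bound: "S t \<le> \<delta>^t * S 0 + 2 * (fbar + bbar) / (1 - \<delta>)"
proof (induction t)
  case 0 thus ?case using dlt fpos bpos by simp
next
  case (Suc t)
  have "S (Suc t) \<le> \<delta> * S t + 2 * (fbar + bbar)" by (rule S_step)
  also have "\<dots> \<le> \<delta> * (\<delta>^t * S 0 + 2 * (fbar + bbar) / (1 - \<delta>)) + 2 * (fbar + bbar)"
    using Suc dpos by (intro add_right_mono mult_left_mono) auto
  also have "\<dots> = \<delta>^Suc t * S 0 + 2 * (fbar + bbar) / (1 - \<delta>)"
    using dlt by (simp add: field_simps)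
  finally show ?case .
qed

end

lemma final_ineq:
  fixes p1 p2 R X1 X2 fbar bbar \<alpha> \<beta> C :: real
  assumes p1: "p1 > 0" and p2: "p2 > 0" and R: "R > 0" and Rp: "R*p2 \<le> p1"
    and X1: "R/(1+R) \<le> X1" and X2: "X2 \<le> 1/(1+R)" "0 \<le> X2"
    and fb: "fbar > 0" and bb: "bbar > 0" and be: "0 \<le> \<beta>" "\<beta> < \<alpha>"
    and C: "p1 + p2 + fbar \<le> C * bbar"
  shows "R*(1 + (\<alpha>-\<beta>)/(C+\<beta>)) \<le> (p1 + fbar*p1/(p1+p2) + \<alpha>*bbar*X1) / (p2 + fbar*p2/(p1+p2) + \<beta>*bbar*X2)"
proof -
  define A where "A = p2 + fbar*p2/(p1+p2)"
  define k where "k = bbar/(1+R)"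
  have kpos: "k > 0" using bb R by (simp add: k_def)
  have Apos: "A > 0" using p1 p2 fb unfolding A_def by (intro add_pos_nonneg) auto
  have f1: "R * (fbar*p2/(p1+p2)) \<le> fbar*p1/(p1+p2)"
    using Rp fb p1 p2 by (simp add: divide_right_mono mult_left_mono)
  have f2: "R * (\<alpha>*k) \<le> \<alpha>*bbar*X1"
  proof -
    have "R * (\<alpha>*k) = \<alpha>*bbar*(R/(1+R))" by (simp add: k_def)
    also have "\<dots> \<le> \<alpha>*bbar*X1" using X1 be bb by (intro mult_left_mono) auto
    finally show ?thesis .
  qed
  have N1: "R*(A + \<alpha>*k) \<le> p1 + fbar*p1/(p1+p2) + \<alpha>*bbar*X1"
    using Rp f1 f2 unfolding A_def by (simp add: ring_distribs)
  have N2: "p2 + fbar*p2/(p1+p2) + \<beta>*bbar*X2 \<le> A + \<beta>*k"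
  proof -
    have "\<beta>*bbar*X2 \<le> \<beta>*bbar*(1/(1+R))" using X2 be bb by (intro mult_left_mono) auto
    thus ?thesis by (simp add: A_def k_def)
  qed
  have N2pos: "0 < p2 + fbar*p2/(p1+p2) + \<beta>*bbar*X2"
    using p1 p2 fb be bb X2 by (simp add: add_pos_nonneg)
  have AC: "A \<le> C*k"
  proof -
    have "A*(1+R) = p2 + R*p2 + fbar*(p2*(1+R))/(p1+p2)" by (simp add: A_def field_simps)
    also have "fbar*(p2*(1+R))/(p1+p2) \<le> fbar*(p1+p2)/(p1+p2)"
      using Rp fb p1 p2 by (intro divide_right_mono mult_left_mono) (auto simp: ring_distribs mult.commute)
    also have "fbar*(p1+p2)/(p1+p2) = fbar" using p1 p2 by simp
    finally have "A*(1+R) \<le> C*bbar" using Rp C by linarith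
    thus ?thesis using R by (simp add: k_def field_simps)
  qed
  have q: "1 + (\<alpha>-\<beta>)/(C+\<beta>) \<le> (A + \<alpha>*k)/(A + \<beta>*k)"
  proof -
    have Cb: "C + \<beta> > 0" using AC Apos kpos be
      by (smt (verit) mult_nonpos_nonneg mult_pos_pos)
    have d: "A + \<beta>*k > 0" using Apos kpos be by (simp add: add_pos_nonneg)
    have "(A + \<alpha>*k)/(A + \<beta>*k) = 1 + (\<alpha>-\<beta>)*k/(A+\<beta>*k)" using d
      by (simp add: field_simps)
    moreover have "(\<alpha>-\<beta>)/(C+\<beta>) \<le> (\<alpha>-\<beta>)*k/(A+\<beta>*k)"
    proof -
      have "(\<alpha>-\<beta>)/(C+\<beta>) = (\<alpha>-\<beta>)*k/((C+\<beta>)*k)" using kpos by simp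
      also have "\<dots> \<le> (\<alpha>-\<beta>)*k/(A+\<beta>*k)"
        using AC be kpos Apos by (intro divide_left_mono) (auto simp: ring_distribs add_pos_nonneg)
      finally show ?thesis .
    qed
    ultimately show ?thesis by simp
  qed
  have "R*(1 + (\<alpha>-\<beta>)/(C+\<beta>)) \<le> R*((A + \<alpha>*k)/(A + \<beta>*k))" using q R by (intro mult_left_mono) auto
  also have "\<dots> = R*(A + \<alpha>*k)/(A + \<beta>*k)" by simp
  also have "\<dots> \<le> R*(A + \<alpha>*k)/(p2 + fbar*p2/(p1+p2) + \<beta>*bbar*X2)"
    using N2 N2pos R Apos kpos be by (intro divide_left_mono) (auto intro!: mult_nonneg_nonneg add_nonneg_nonneg)
  also have "\<dots> \<le> (p1 + fbar*p1/(p1+p2) + \<alpha>*bbar*X1) / (p2 + fbar*p2/(p1+p2) + \<beta>*bbar*X2)"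
    using N1 N2pos by (intro divide_right_mono) auto
  finally show ?thesis .
qed

lemma ratio_lo: fixes a c R :: real assumes "a > 0" "c > 0" "R \<le> a/c" "R > 0"
  shows "R/(1+R) \<le> a/(a+c)"
proof -
  have "R*c \<le> a" using assms by (simp add: pos_le_divide_eq)
  thus ?thesis using assms by (simp add: divide_simps) (simp add: algebra_simps)
qed
lemma ratio_hi: fixes a c R :: real assumes "a > 0" "c > 0" "R \<le> a/c" "R > 0"
  shows "c/(a+c) \<le> 1/(1+R)"
proof -
  have "R*c \<le> a" using assms by (simp add: pos_le_divide_eq)
  thus ?thesis using assms by (simp add: divide_simps) (simp add: algebra_simps)
qed

theorem mainTheorem10:
  fixes m n :: nat and l :: "vtx \<Rightarrow> real" and \<delta> fbar bbar :: real
    and p :: "nat \<Rightarrow> vtx \<Rightarrow> vtx \<Rightarrow> real" and f b :: "nat \<Rightarrow> vtx \<Rightarrow> real" and t :: nat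
  assumes "m \<ge> 1" and "n \<ge> 1" and "\<not> (m = 1 \<and> n = 1)"
    and "0 < \<delta>" and "\<delta> < 1"
    and "\<forall>v\<in>verts (edges2 m n). 0 \<le> l v \<and> l v \<le> 1"
    and "fbar > 0" and "bbar > 0"
    and "ant_dynamics (edges2 m n) Src Dst l \<delta> (\<lambda>_. fbar) (\<lambda>_. bbar) p f b"
    and "\<forall>(u, v)\<in>edges2 m n. p 0 u v > 0"
    and "\<forall>v\<in>verts (edges2 m n) - {Src, Dst}. 0 \<le> f 0 v \<and> f 0 v \<le> fbar \<and> 0 \<le> b 0 v \<and> b 0 v \<le> bbar"
    and "leak1 m l < leak2 n l"
    and "real t \<ge> real (max m n) + max 0
           (Max ((\<lambda>(u, v). ln (p 0 u v / (fbar + bbar)) / ln (1 / \<delta>)) ` edges2 m n))"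
  shows "r_s1 m n p (t + 1) \<ge> r_min m n p t *
           (1 + ((1 - leak1 m l) - (1 - leak2 n l))
                / (5 * (fbar + bbar) / (bbar * (1 - \<delta>)) + (1 - leak2 n l)))"
proof -
  interpret A: ant m n l \<delta> fbar bbar p f b using assms(1-11) by unfold_locales auto
  define F where "F = fbar + bbar"
  define L where "L = max m n"
  define M where "M = Max ((\<lambda>(u, v). ln (p 0 u v / (fbar + bbar)) / ln (1 / \<delta>)) ` edges2 m n)"
  have Fpos: "F > 0" using assms(7,8) by (simp add: F_def)
  have tM: "real L + max 0 M \<le> real t" using assms(13) by (simp add: L_def M_def)
  hence tL: "L \<le> t" by linarith
  have L1: "1 \<le> L" using assms(1) by (simp add: L_def)
  have lnd: "ln (1/\<delta>) > 0" using assms(4,5) by simp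
  have ebound: "\<delta>^t * p 0 u v \<le> F" if e: "(u,v) \<in> edges2 m n" for u v
  proof -
    have p0: "p 0 u v > 0" using assms(10) e by auto
    have "ln (p 0 u v / F) / ln (1/\<delta>) \<le> M"
      unfolding M_def F_def using e finite_edges by (intro Max_ge) force+
    hence "ln (p 0 u v / F) / ln (1/\<delta>) \<le> real t" using tM by linarith
    hence "ln (p 0 u v / F) \<le> real t * ln (1/\<delta>)" using lnd by (simp add: divide_le_eq)
    also have "\<dots> = ln ((1/\<delta>)^t)" using assms(4) by (simp add: ln_realpow)
    finally have "p 0 u v / F \<le> (1/\<delta>)^t" using p0 Fpos assms(4) by (simp add: ln_le_cancel_iff)
    hence "p 0 u v \<le> F * (1/\<delta>)^t" using Fpos by (simp add: divide_le_eq mult.commute)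
    hence "\<delta>^t * p 0 u v \<le> \<delta>^t * (F * (1/\<delta>)^t)" using assms(4) by (intro mult_left_mono) auto
    also have "\<dots> = F" using assms(4) by (simp add: power_one_over field_simps)
    finally show ?thesis .
  qed
  define s1 where "s1 = pv1 m 1"
  define s2 where "s2 = pv2 n 1"
  define p1 where "p1 = p t Src s1"
  define p2 where "p2 = p t Src s2"
  have p1pos: "p1 > 0" and p2pos: "p2 > 0" unfolding p1_def p2_def s1_def s2_def
    using A.pos[OF A.eS1] A.pos[OF A.eS2] by auto
  have Sb: "p1 + p2 \<le> 2*F + 2*F/(1-\<delta>)"
  proof -
    have "p1 + p2 = A.S t" by (simp add: A.S_def p1_def p2_def s1_def s2_def)
    also have "\<dots> \<le> \<delta>^t * A.S 0 + 2 * F / (1 - \<delta>)" using A.S_bound[of t] by (simp add: F_def)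
    also have "\<delta>^t * A.S 0 \<le> 2*F" using ebound[OF A.eS1] ebound[OF A.eS2] by (simp add: A.S_def ring_distribs)
    finally show ?thesis by simp
  qed
  define C where "C = 5 * (fbar + bbar) / (bbar * (1 - \<delta>))"
  have Cb: "p1 + p2 + fbar \<le> C * bbar"
  proof -
    have "C * bbar = 5*F/(1-\<delta>)" using assms(8) by (simp add: C_def F_def)
    moreover have "3*F \<le> 3*F/(1-\<delta>)" using Fpos assms(4,5) by (simp add: le_divide_eq)
    moreover have "2*F + 2*F/(1-\<delta>) + 3*F/(1-\<delta>) = 2*F + 5*F/(1-\<delta>)" by (simp add: field_simps)
    ultimately show ?thesis using Sb assms(7,8) by (simp add: F_def)
  qed
  define Rs where "Rs = (\<lambda>i. r_s1 m n p (t - i)) ` {..<L} \<union> (\<lambda>i. r_d1 m n p (t - i)) ` {..<L}"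
  have R_def': "r_min m n p t = Min Rs" by (simp add: r_min_def Rs_def L_def)
  have finR: "finite Rs" and neR: "Rs \<noteq> {}" using L1 by (auto simp: Rs_def lessThan_empty_iff)
  have rs_pos: "r_s1 m n p u > 0" for u unfolding r_s1_def
    using A.pos[OF A.eS1] A.pos[OF A.eS2] by simp
  have rd_pos: "r_d1 m n p u > 0" for u unfolding r_d1_def
    using A.pos[OF A.eD1] A.pos[OF A.eD2] by simp
  define R where "R = r_min m n p t"
  have Rpos: "R > 0" unfolding R_def R_def' using Min_in[OF finR neR] rs_pos rd_pos
    by (auto simp: Rs_def)
  have R1: "R \<le> r_s1 m n p t" unfolding R_def R_def' using finR L1
    by (intro Min_le) (auto simp: Rs_def intro!: image_eqI[of _ _ 0])
  have R2: "R \<le> r_d1 m n p (t - (m-1))" unfolding R_def R_def' using finR assms(1)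
    by (intro Min_le) (auto simp: Rs_def L_def intro!: image_eqI[of _ _ "m-1"])
  have R3: "R \<le> r_d1 m n p (t - (n-1))" unfolding R_def R_def' using finR assms(2)
    by (intro Min_le) (auto simp: Rs_def L_def intro!: image_eqI[of _ _ "n-1"])
  define \<alpha> where "\<alpha> = 1 - leak1 m l"
  define \<beta> where "\<beta> = 1 - leak2 n l"
  have be0: "0 \<le> \<beta>"
  proof -
    have "0 \<le> 1 - l (V2 k)" if "k \<in> {0<..<n}" for k
    proof -
      have "(V2 k, pv2 n (Suc k)) \<in> edges2 m n" using edge2[of k n m] that by (simp add: pv2_def)
      hence "V2 k \<in> verts (edges2 m n)" by (rule A.in_verts1)
      thus ?thesis using assms(6) by auto
    qed
    thus ?thesis unfolding \<beta>_def leak2_def using prod_nonneg[of "{0<..<n}" "\<lambda>k. 1 - l (V2 k)"] by simp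
  qed
  have ab: "\<beta> < \<alpha>" using assms(12) by (simp add: \<alpha>_def \<beta>_def)
  define X1 where "X1 = A.x1 (t - (m-1))"
  define X2 where "X2 = A.x2 (t - (n-1))"
  have X1: "R/(1+R) \<le> X1" unfolding X1_def A.x1_def
    using ratio_lo[OF A.pos[OF A.eD1] A.pos[OF A.eD2] _ Rpos] R2 by (simp add: r_d1_def)
  have X2: "X2 \<le> 1/(1+R)" unfolding X2_def A.x2_def
    using ratio_hi[OF A.pos[OF A.eD1] A.pos[OF A.eD2] _ Rpos] R3 by (simp add: r_d1_def)
  have X20: "0 \<le> X2" unfolding X2_def A.x2_def
    using A.pos[OF A.eD1] A.pos[OF A.eD2] by (simp add: add_pos_pos less_imp_le)
  have Rp: "R*p2 \<le> p1" using R1 p2pos by (simp add: r_s1_def p1_def p2_def s1_def s2_def pos_le_divide_eq)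
  have ineq: "R*(1 + (\<alpha>-\<beta>)/(C+\<beta>)) \<le> (p1 + fbar*p1/(p1+p2) + \<alpha>*bbar*X1) / (p2 + fbar*p2/(p1+p2) + \<beta>*bbar*X2)"
    by (rule final_ineq[OF p1pos p2pos Rpos Rp X1 X2 X20 assms(7,8) be0 ab Cb])
  have bb1: "m - 1 \<le> t" using tL by (auto simp: L_def)
  have N1: "p (Suc t) Src s1 = \<delta> * (p1 + fbar*p1/(p1+p2) + \<alpha>*bbar*X1)"
    unfolding s1_def A.pstep[OF A.eS1] A.fS1 A.bS1[of t, OF bb1]
    by (simp add: p1_def p2_def s1_def s2_def \<alpha>_def X1_def L_def)
  have bb2: "n - 1 \<le> t" using tL by (auto simp: L_def)
  have N2: "p (Suc t) Src s2 = \<delta> * (p2 + fbar*p2/(p1+p2) + \<beta>*bbar*X2)"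
    unfolding s2_def A.pstep[OF A.eS2] A.fS2 A.bS2[of t, OF bb2]
    by (simp add: p1_def p2_def s1_def s2_def \<beta>_def X2_def L_def)
  have "r_s1 m n p (t + 1) = (p1 + fbar*p1/(p1+p2) + \<alpha>*bbar*X1) / (p2 + fbar*p2/(p1+p2) + \<beta>*bbar*X2)"
    unfolding r_s1_def using N1 N2 assms(4) by (simp add: s1_def s2_def)
  thus ?thesis using ineq by (simp add: R_def C_def \<alpha>_def \<beta>_def)
qed

end
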